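(* For every finite set $S$ of states containing the distinguished blank state $\text{␣}$, there exists a 4-CAS $\mathcal{C}=(L,A,S,N_4,\{f_c\}_{c\in L\setminus A})$ with state set $S$ and four distinct cells $a_1,a_2\in A$, $b_1,b_2\in L$, together with delays $\delta_1,\delta_2\in\mathbb{Z}$, such that $\mathcal{C}$ is a channel from $a_1$ to $b_1$ with delay $\delta_1$ and a channel from $a_2$ to $b_2$ with delay $\delta_2$, and $\mathcal{C}$ crosses these two channels.
   Context: A cellular automaton with sources (CAS) is a tuple $\mathcal{C}=(L,A,S,N,\{f_c\}_{c\in L\setminus A})$ where: $L$ is a subset of a lattice (here always $\mathbb{Z}^2$), whose elements are cells; $A\subseteq L$ is the set of sources; $S$ is a finite set of states containing a distinguished blank state $\text{␣}$; $N=(n_1,\dots,n_\nu)$ is a fixed tuple of distinct neighbourhood offsets containing $0$; and for each non-source $c$, $f_c:S^\nu\times\mathbb{N}\to S$ is a transition function that does not depend on its $i$-th argument whenever $c+n_i\notin L$. A message is a function $m:\{0,1,\dots,r\}\to S\setminus\{\text{␣}\}$ with $r\in\mathbb{N}$ its length $\lambda(m)$. An input is a map $\iota$ assigning a message to each source. Configurations $C_{t,\iota}:L\to S$ ($t\in\mathbb{N}$) are defined by: $C_{0,\iota}(c)=\iota(c)(0)$ for $c\in A$ and $C_{0,\iota}(c)=\text{␣}$ for $c\notin A$ (blank-initialization, assumed throughout); and $C_{t+1,\iota}(c)=\iota(c)(t+1)$ if $c\in A$ and $t<\lambda(\iota(c))$, $C_{t+1,\iota}(c)=\text{␣}$ if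 $c\in A$ and $t\ge\lambda(\iota(c))$, and $C_{t+1,\iota}(c)=f_c(C_{t,\iota}(c+n_1),\dots,C_{t,\iota}(c+n_\nu),t+1)$ otherwise. A 4-CAS is a CAS with $L\subseteq\mathbb{Z}^2$ and $N=N_4:=((-1,0),(0,-1),(1,0),(0,1),(0,0))$. Channel: for $\delta\in\mathbb{Z}$ and cells $x,y$, $\mathcal{C}$ is a channel from $x$ to $y$ with delay $\delta$ if for all $t\in\mathbb{N}$ and all inputs $\iota$, $C_{t,\iota}(y)=C_{t-\delta,\iota}(x)$ when $t\ge\delta$ and $C_{t,\iota}(y)=\text{␣}$ when $t<\delta$. Connectedness: $L$ is connected if any two cells of $L$ are joined by a finite sequence of cells of $L$, each consecutive pair differing by an offset in $N$ (for 4-CAS: orthogonally adjacent). External boundary: viewing each cell of $\mathbb{Z}^2$ as a unit square in $\mathbb{R}^2$, a finite connected $L$ has an external boundary, a cyclic sequence $(e_0,\dots,e_{k-1})$ of unit edges such that consecutive edges $e_i,e_{i+1 \bmod k}$ meet at vertices $v_i$, the $v_i$ are distinct (a simple closed curve), each $e_i$ separates a cell $\bar e_i\in L$ from a cell not in $L$, and $L$ lies in the bounded region enclosed; it is unique up to reversal and cyclic shift. Crossing: a CAS that is a channel from $a_1$ to $b_1$ and from $a_2$ to $b_2$, for four distinct cells $a_1,a_2\in A$, $b_1,b_2\in L$, crosses these channels if (i) $L$ is connected; (ii) whenever $\bar e_i=\bar e_j\in\{a_1,a_2,b_1,b_2\}$ with $i\le j$, either $|\{\bar e_l: i\le l\le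 j\}|=1$ or $|\{\bar e_l: 0\le l\le i \text{ or } j\le l\le k-1\}|=1$; and (iii) there exist indices $\alpha<\beta<\gamma<\delta$ of boundary edges such that $(\bar e_\alpha,\bar e_\beta,\bar e_\gamma,\bar e_\delta)$ is a cyclic permutation of $(a_1,a_2,b_1,b_2)$ or of $(b_2,b_1,a_2,a_1)$. *)

theory Defs
  imports "HOL-Analysis.Analysis"
begin

type_synonym cell = "int \<times> int"

definition cadd :: "cell \<Rightarrow> cell \<Rightarrow> cell" where
  "cadd c n = (fst c + fst n, snd c + snd n)"

definition N4 :: "cell list" where
  "N4 = [(-1,0), (0,-1), (1,0), (0,1), (0,0)]"

text \<open>The transition function
  f c is applied to the tuple of neighbour states (a list of length |N|, in
  the order of N) and the time.\<close>
definition is_CAS ::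
  "'s set \<Rightarrow> 's \<Rightarrow> cell set \<Rightarrow> cell set \<Rightarrow> cell list \<Rightarrow> (cell \<Rightarrow> 's list \<Rightarrow> nat \<Rightarrow> 's) \<Rightarrow> bool" where
  "is_CAS S bl L A N f \<longleftrightarrow>
     finite S \<and> bl \<in> S \<and> A \<subseteq> L \<and> distinct N \<and> (0,0) \<in> set N \<and>
     (\<forall>c \<in> L - A. \<forall>xs t. length xs = length N \<and> set xs \<subseteq> S \<longrightarrow> f c xs t \<in> S) \<and>
     (\<forall>c \<in> L - A. \<forall>xs ys t. length xs = length N \<and> length ys = length N \<and>
        set xs \<subseteq> S \<and> set ys \<subseteq> S \<and>
        (\<forall>i < length N. cadd c (N ! i) \<in> L \<longrightarrow> xs ! i = ys ! i)
        \<longrightarrow> f c xs t = f c ys t)"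

text \<open>A message m : {0..r} -> S - {blank} is a nonempty list; its length
  lambda(m) = r is the list length minus one.  An input assigns a message to
  every source.\<close>
definition valid_input :: "'s set \<Rightarrow> 's \<Rightarrow> cell set \<Rightarrow> (cell \<Rightarrow> 's list) \<Rightarrow> bool" where
  "valid_input S bl A \<iota> \<longleftrightarrow> (\<forall>c \<in> A. \<iota> c \<noteq> [] \<and> set (\<iota> c) \<subseteq> S - {bl})"

text \<open>Configurations C_{t,iota} (blank-initialised).  Cells outside L are
  given the blank state; this value is never used by a well-formed CAS.\<close>
fun conf :: "cell set \<Rightarrow> cell set \<Rightarrow> cell list \<Rightarrow> (cell \<Rightarrow> 's list \<Rightarrow> nat \<Rightarrow> 's)
     \<Rightarrow> 's \<Rightarrow> (cell \<Rightarrow> 's list) \<Rightarrow> nat \<Rightarrow> cell \<Rightarrow> 's" where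
  "conf L A N f bl \<iota> 0 c = (if c \<in> A then \<iota> c ! 0 else bl)"
| "conf L A N f bl \<iota> (Suc t) c =
     (if c \<in> A then (if t < length (\<iota> c) - 1 then \<iota> c ! Suc t else bl)
      else if c \<in> L then f c (map (\<lambda>n. conf L A N f bl \<iota> t (cadd c n)) N) (Suc t)
      else bl)"

definition is_channel ::
  "'s set \<Rightarrow> 's \<Rightarrow> cell set \<Rightarrow> cell set \<Rightarrow> cell list \<Rightarrow> (cell \<Rightarrow> 's list \<Rightarrow> nat \<Rightarrow> 's)
     \<Rightarrow> cell \<Rightarrow> cell \<Rightarrow> int \<Rightarrow> bool" where
  "is_channel S bl L A N f x y \<delta> \<longleftrightarrow>
     (\<forall>\<iota>. valid_input S bl A \<iota> \<longrightarrow>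
        (\<forall>t::nat. conf L A N f bl \<iota> t y =
            (if int t \<ge> \<delta> then conf L A N f bl \<iota> (nat (int t - \<delta>)) x else bl)))"

definition cells_connected :: "cell set \<Rightarrow> cell list \<Rightarrow> bool" where
  "cells_connected L N \<longleftrightarrow>
     (\<forall>x \<in> L. \<forall>y \<in> L. (x, y) \<in> {(u, v). u \<in> L \<and> v \<in> L \<and> (\<exists>n \<in> set N. v = cadd u n)}\<^sup>*)"

text \<open>Geometry of the boundary.  Cell (a,b) is the unit square [a,a+1] x [b,b+1];
  lattice points are vertices; a unit edge joins two vertices at distance 1.\<close>
definition unit_step :: "cell \<Rightarrow> cell \<Rightarrow> bool" where
  "unit_step p q \<longleftrightarrow> (fst q - fst p, snd q - snd p) \<in> {(1,0), (-1,0), (0,1), (0,-1)}"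

definition edge_cells :: "cell \<Rightarrow> cell \<Rightarrow> cell \<times> cell" where
  "edge_cells p q =
     (if snd p = snd q
      then ((min (fst p) (fst q), snd p), (min (fst p) (fst q), snd p - 1))
      else ((fst p, min (snd p) (snd q)), (fst p - 1, min (snd p) (snd q))))"

text \<open>The vertex list vs = (v_0,...,v_{k-1}) describes the cyclic edge sequence
  e_i = {v_{i-1 mod k}, v_i}, so that e_i and e_{i+1} meet at v_i.\<close>
definition bprev :: "cell list \<Rightarrow> nat \<Rightarrow> cell" where
  "bprev vs i = vs ! ((i + length vs - 1) mod length vs)"

definition rpt :: "cell \<Rightarrow> real \<times> real" where
  "rpt p = (real_of_int (fst p), real_of_int (snd p))"

definition bcurve :: "cell list \<Rightarrow> (real \<times> real) set" where
  "bcurve vs = (\<Union>i < length vs. closed_segment (rpt (bprev vs i)) (rpt (vs ! i)))"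

definition open_square :: "cell \<Rightarrow> (real \<times> real) set" where
  "open_square c = {z. real_of_int (fst c) < fst z \<and> fst z < real_of_int (fst c) + 1 \<and>
                       real_of_int (snd c) < snd z \<and> snd z < real_of_int (snd c) + 1}"

definition separates :: "cell set \<Rightarrow> cell \<times> cell \<Rightarrow> bool" where
  "separates L cs \<longleftrightarrow> (fst cs \<in> L \<longleftrightarrow> snd cs \<notin> L)"

definition ebar :: "cell set \<Rightarrow> cell list \<Rightarrow> nat \<Rightarrow> cell" where
  "ebar L vs i = (let cs = edge_cells (bprev vs i) (vs ! i) in
                  if fst cs \<in> L then fst cs else snd cs)"

definition ext_boundary :: "cell set \<Rightarrow> cell list \<Rightarrow> bool" where
  "ext_boundary L vs \<longleftrightarrow>
     length vs \<ge> 3 \<and> distinct vs \<and>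
     (\<forall>i < length vs. unit_step (bprev vs i) (vs ! i) \<and>
                      separates L (edge_cells (bprev vs i) (vs ! i))) \<and>
     (\<forall>c \<in> L. open_square c \<subseteq> inside (bcurve vs))"

definition crosses :: "cell set \<Rightarrow> cell list \<Rightarrow> cell \<Rightarrow> cell \<Rightarrow> cell \<Rightarrow> cell \<Rightarrow> bool" where
  "crosses L N a1 a2 b1 b2 \<longleftrightarrow>
     finite L \<and> cells_connected L N \<and>
     (\<exists>vs. ext_boundary L vs \<and>
        (let k = length vs; e = ebar L vs in
         (\<forall>i j. i \<le> j \<and> j < k \<and> e i = e j \<and> e i \<in> {a1, a2, b1, b2} \<longrightarrow>
             card (e ` {i..j}) = 1 \<or> card (e ` ({0..i} \<union> {j..<k})) = 1) \<and>
         (\<exists>\<alpha> \<beta> \<gamma> \<delta>. \<alpha> < \<beta> \<and> \<beta> < \<gamma> \<and> \<gamma> < \<delta> \<and> \<delta> < k \<and>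
             (\<exists>r < 4. [e \<alpha>, e \<beta>, e \<gamma>, e \<delta>] = rotate r [a1, a2, b1, b2] \<or>
                      [e \<alpha>, e \<beta>, e \<gamma>, e \<delta>] = rotate r [b2, b1, a2, a1]))))"

end

theory Submission
  imports Defs
begin

definition tbl :: "(cell \<times> (nat \<times> nat) \<times> (cell \<times> nat) \<times> (cell \<times> nat)) list" where
"tbl = [((1,2),(0,0),((0,2),1),((0,2),1)),
 ((2,1),(1,1),((2,0),1),((2,0),1)),
 ((2,2),(0,1),((2,0),2),((0,2),2)),
 ((3,2),(1,0),((0,2),3),((2,0),4)),
 ((2,3),(1,0),((0,2),4),((2,0),3)),
 ((3,3),(0,1),((2,0),5),((0,2),5)),
 ((1,3),(4,1),((0,2),2),((0,2),3)),
 ((4,3),(4,0),((0,2),6),((0,2),7)),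
 ((5,3),(4,0),((0,2),8),((0,2),9)),
 ((4,2),(0,4),((0,2),5),((0,2),4)),
 ((5,2),(4,0),((0,2),5),((0,2),6)),
 ((6,2),(4,0),((0,2),7),((0,2),8)),
 ((6,3),(0,1),((0,2),9),((0,2),9)),
 ((3,1),(0,4),((2,0),3),((2,0),2)),
 ((3,4),(1,4),((2,0),7),((2,0),6)),
 ((3,5),(4,1),((2,0),7),((2,0),8)),
 ((2,4),(4,1),((2,0),4),((2,0),5)),
 ((2,5),(4,1),((2,0),6),((2,0),7)),
 ((2,6),(4,1),((2,0),8),((2,0),9)),
 ((3,6),(0,1),((2,0),9),((2,0),9))]"

definition LL :: "cell set" where
  "LL = {c. 0 \<le> fst c \<and> fst c \<le> 6 \<and> 0 \<le> snd c \<and> snd c \<le> 6}"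

definition AA :: "cell set" where "AA = {(0,2),(2,0)}"

definition act :: "cell set" where "act = set (map fst tbl)"

definition ff :: "'s \<Rightarrow> cell \<Rightarrow> 's list \<Rightarrow> nat \<Rightarrow> 's" where
  "ff bl c xs t = (case map_of tbl c of Some ((s0,s1),_) \<Rightarrow> xs ! (if odd t then s0 else s1) | None \<Rightarrow> bl)"

definition invt :: "cell \<Rightarrow> nat \<Rightarrow> cell \<times> nat" where
  "invt c p = (if c \<in> AA then (c,0) else case map_of tbl c of Some (_,i0,i1) \<Rightarrow> if p = 0 then i0 else i1 | None \<Rightarrow> (c,0))"

definition step_ok :: "cell \<Rightarrow> nat \<Rightarrow> nat \<Rightarrow> bool" where
  "step_ok c s p = (let n = cadd c (N4 ! s) in (n \<in> act \<or> n \<in> AA) \<and>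
      invt c (1 - p) = (fst (invt n p), Suc (snd (invt n p))))"

definition ok_entry :: "(cell \<times> (nat \<times> nat) \<times> (cell \<times> nat) \<times> (cell \<times> nat)) \<Rightarrow> bool" where
  "ok_entry e = (case e of (c,(s0,s1),i0,i1) \<Rightarrow> s0 < 5 \<and> s1 < 5 \<and> snd i0 \<ge> 1 \<and> c \<in> LL \<and> c \<notin> AA
        \<and> step_ok c s0 0 \<and> step_ok c s1 1)"

lemma all_ok: "list_all ok_entry tbl"
  by (simp add: tbl_def ok_entry_def step_ok_def invt_def act_def AA_def LL_def N4_def cadd_def)

lemma dist_tbl: "distinct (map fst tbl)"
  by (simp add: tbl_def)

lemma entry_of: assumes "c \<in> act" obtains s0 s1 i0 i1 where
  "map_of tbl c = Some ((s0,s1),i0,i1)" "ok_entry (c,(s0,s1),i0,i1)"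
proof -
  from assms obtain e where e: "e \<in> set tbl" "fst e = c" unfolding act_def by auto
  obtain s0 s1 i0 i1 where ee: "e = (c,(s0,s1),i0,i1)" using e(2) by (metis prod.collapse)
  have "map_of tbl c = Some ((s0,s1),i0,i1)" using e ee dist_tbl by (metis map_of_is_SomeI)
  moreover have "ok_entry (c,(s0,s1),i0,i1)" using all_ok e ee by (simp add: list_all_iff)
  ultimately show ?thesis using that by blast
qed

lemma AA_L: "AA \<subseteq> LL" by (auto simp: AA_def LL_def)
lemma act_L: "act \<subseteq> LL"
proof
  fix c assume "c \<in> act" then obtain s0 s1 i0 i1 where "ok_entry (c,(s0,s1),i0,i1)" by (rule entry_of)
  then show "c \<in> LL" by (simp add: ok_entry_def)
qed
lemma act_AA: "c \<in> act \<Longrightarrow> c \<notin> AA"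
  by (erule entry_of) (simp add: ok_entry_def)

lemma len_N4: "length N4 = 5" by (simp add: N4_def)

definition Vl :: "'s \<Rightarrow> (cell \<Rightarrow> 's list) \<Rightarrow> cell \<times> nat \<Rightarrow> nat \<Rightarrow> 's" where
  "Vl bl \<iota> kd T = (if snd kd \<le> T then conf LL AA N4 (ff bl) bl \<iota> (T - snd kd) (fst kd) else bl)"

lemma invariant:
  "\<forall>c. c \<in> act \<or> c \<in> AA \<longrightarrow> conf LL AA N4 (ff bl) bl \<iota> T c = Vl bl \<iota> (invt c (T mod 2)) T"
proof (induction T)
  case 0
  show ?case
  proof (intro allI impI)
    fix c assume "c \<in> act \<or> c \<in> AA"
    then show "conf LL AA N4 (ff bl) bl \<iota> 0 c = Vl bl \<iota> (invt c (0 mod 2)) 0"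
    proof
      assume "c \<in> AA" then show ?thesis by (simp add: Vl_def invt_def)
    next
      assume c: "c \<in> act"
      then obtain s0 s1 i0 i1 where m: "map_of tbl c = Some ((s0,s1),i0,i1)" "ok_entry (c,(s0,s1),i0,i1)"
        by (rule entry_of)
      show ?thesis using m act_AA[OF c] by (simp add: Vl_def invt_def ok_entry_def)
    qed
  qed
next
  case (Suc T)
  show ?case
  proof (intro allI impI)
    fix c assume "c \<in> act \<or> c \<in> AA"
    then show "conf LL AA N4 (ff bl) bl \<iota> (Suc T) c = Vl bl \<iota> (invt c (Suc T mod 2)) (Suc T)"
    proof
      assume "c \<in> AA" then show ?thesis by (simp add: Vl_def invt_def)
    next
      assume c: "c \<in> act"
      then obtain s0 s1 i0 i1 where m: "map_of tbl c = Some ((s0,s1),i0,i1)" "ok_entry (c,(s0,s1),i0,i1)"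
        by (rule entry_of)
      define s where "s = (if odd (Suc T) then s0 else s1)"
      define p where "p = T mod 2"
      have par: "odd (Suc T) \<longleftrightarrow> T mod 2 = 0" "T mod 2 = 0 \<or> T mod 2 = 1" by presburger+
      have sp: "step_ok c s p" using m(2) par
        by (auto simp: s_def p_def ok_entry_def)
      have s5: "s < 5" using m(2) by (auto simp: s_def ok_entry_def)
      define n where "n = cadd c (N4 ! s)"
      have n: "n \<in> act \<or> n \<in> AA" and ic: "invt c (1 - p) = (fst (invt n p), Suc (snd (invt n p)))"
        using sp by (auto simp: step_ok_def n_def Let_def)
      have "conf LL AA N4 (ff bl) bl \<iota> (Suc T) c = ff bl c (map (\<lambda>n. conf LL AA N4 (ff bl) bl \<iota> T (cadd c n)) N4) (Suc T)"
        using c act_AA[OF c] act_L by auto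
      also have "\<dots> = conf LL AA N4 (ff bl) bl \<iota> T n"
        proof -
        have "ff bl c (map (\<lambda>n. conf LL AA N4 (ff bl) bl \<iota> T (cadd c n)) N4) (Suc T)
              = (map (\<lambda>n. conf LL AA N4 (ff bl) bl \<iota> T (cadd c n)) N4) ! s"
          using m by (simp add: ff_def s_def)
        then show ?thesis using s5 len_N4 by (simp add: n_def)
      qed
      also have "\<dots> = Vl bl \<iota> (invt n p) T" using Suc.IH n unfolding p_def by blast
      also have "\<dots> = Vl bl \<iota> (invt c (1 - p)) (Suc T)" using ic by (simp add: Vl_def)
      also have "1 - p = Suc T mod 2" by (simp add: p_def mod_Suc)
      finally show ?thesis .
    qed
  qed
qed

lemma chan:
  assumes "b \<in> act" "\<And>p. invt b p = (a, 9)"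
  shows "is_channel S bl LL AA N4 (ff bl) a b 9"
  unfolding is_channel_def
proof (intro allI impI)
  fix \<iota> t
  have "conf LL AA N4 (ff bl) bl \<iota> t b = Vl bl \<iota> (a,9) t" using invariant assms by metis
  then show "conf LL AA N4 (ff bl) bl \<iota> t b = (if int t \<ge> 9 then conf LL AA N4 (ff bl) bl \<iota> (nat (int t - 9)) a else bl)"
    by (simp add: Vl_def nat_diff_distrib)
qed

lemma cas: assumes "finite S" "bl \<in> S" shows "is_CAS S bl LL AA N4 (ff bl)"
  unfolding is_CAS_def
proof (intro conjI ballI allI impI)
  show "AA \<subseteq> LL" by (rule AA_L)
  show "distinct N4" "(0,0) \<in> set N4" by (simp_all add: N4_def)
next
  fix c xs t assume c: "c \<in> LL - AA" and xs: "length xs = length N4 \<and> set xs \<subseteq> S"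
  show "ff bl c xs t \<in> S"
  proof (cases "c \<in> act")
    case True
    then obtain s0 s1 i0 i1 where m: "map_of tbl c = Some ((s0,s1),i0,i1)" "ok_entry (c,(s0,s1),i0,i1)"
      by (rule entry_of)
    then show ?thesis using xs by (auto simp: ff_def ok_entry_def N4_def intro!: subsetD[OF _ nth_mem])
  next
    case False
    then have "map_of tbl c = None" unfolding act_def by (simp add: map_of_eq_None_iff)
    then show ?thesis using assms by (simp add: ff_def)
  qed
next
  fix c xs ys t assume c: "c \<in> LL - AA" and h: "length xs = length N4 \<and> length ys = length N4 \<and>
        set xs \<subseteq> S \<and> set ys \<subseteq> S \<and>
        (\<forall>i < length N4. cadd c (N4 ! i) \<in> LL \<longrightarrow> xs ! i = ys ! i)"
  show "ff bl c xs t = ff bl c ys t"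
  proof (cases "c \<in> act")
    case True
    then obtain s0 s1 i0 i1 where m: "map_of tbl c = Some ((s0,s1),i0,i1)" "ok_entry (c,(s0,s1),i0,i1)"
      by (rule entry_of)
    define s where "s = (if odd t then s0 else s1)"
    have "step_ok c s 0 \<or> step_ok c s 1" using m(2) by (auto simp: ok_entry_def s_def)
    then have "cadd c (N4 ! s) \<in> LL" using act_L AA_L by (auto simp: step_ok_def Let_def)
    moreover have "s < 5" using m(2) by (auto simp: ok_entry_def s_def)
    ultimately have "xs ! s = ys ! s" using h by (simp add: N4_def)
    then show ?thesis using m by (simp add: ff_def s_def)
  next
    case False
    then have "map_of tbl c = None" unfolding act_def by (simp add: map_of_eq_None_iff)
    then show ?thesis by (simp add: ff_def)
  qed
qed (use assms in auto)



definition vf :: "nat \<Rightarrow> cell" where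
  "vf i = (if i \<le> 7 then (int i, 0) else if i \<le> 14 then (7, int i - 7)
           else if i \<le> 21 then (21 - int i, 7) else (0, 28 - int i))"

definition vs :: "cell list" where "vs = map vf [0..<28]"


lemma len_vs: "length vs = 28" by (simp add: vs_def)
lemma vs_nth: "i < 28 \<Longrightarrow> vs ! i = vf i" by (simp add: vs_def)
lemma bprev_vs: "i < 28 \<Longrightarrow> bprev vs i = vf ((i + 27) mod 28)"
  by (simp add: bprev_def len_vs vs_nth add.commute)

lemma all28: "(\<forall>i<28. P i) \<longleftrightarrow> list_all P [0..<28]"
  by (auto simp: list_all_iff)

lemma ebar_list: "map (ebar LL vs) [0..<28] =
  [(0,0),(0,0),(1,0),(2,0),(3,0),(4,0),(5,0),(6,0),(6,0),(6,1),(6,2),(6,3),(6,4),(6,5),(6,6),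
   (6,6),(5,6),(4,6),(3,6),(2,6),(1,6),(0,6),(0,6),(0,5),(0,4),(0,3),(0,2),(0,1)]"
  by (simp add: upt_rec ebar_def bprev_vs vs_nth vf_def edge_cells_def LL_def Let_def)

lemma ebar_nth: "i < 28 \<Longrightarrow> ebar LL vs i = map (ebar LL vs) [0..<28] ! i" by simp

lemma bnd_checks: "\<forall>i<28. unit_step (bprev vs i) (vs ! i) \<and> separates LL (edge_cells (bprev vs i) (vs ! i))"
  unfolding all28
  by (simp add: upt_rec bprev_vs vs_nth vf_def edge_cells_def LL_def unit_step_def separates_def)

lemma dist_vs: "distinct vs"
  by (simp add: vs_def upt_rec vf_def)

lemma uniq: "\<forall>i<28. (ebar LL vs i = (0,2) \<longrightarrow> i = 26) \<and> (ebar LL vs i = (2,0) \<longrightarrow> i = 3)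
   \<and> (ebar LL vs i = (6,3) \<longrightarrow> i = 11) \<and> (ebar LL vs i = (3,6) \<longrightarrow> i = 18)"
  unfolding all28
  by (simp add: upt_rec ebar_def bprev_vs vs_nth vf_def edge_cells_def LL_def Let_def)

definition UU :: "(real \<times> real) set" where "UU = {0<..<7} \<times> {0<..<7}"
definition KK :: "(real \<times> real) set" where "KK = {0..7} \<times> {0..7}"

lemma curve_sub: "bcurve vs \<subseteq> KK - UU"
proof -
  let ?S1 = "{0::real} \<times> {0..7::real}" let ?S2 = "{7::real} \<times> {0..7::real}"
  let ?S3 = "{0..7::real} \<times> {0::real}" let ?S4 = "{0..7::real} \<times> {7::real}"
  have cv: "convex ?S1" "convex ?S2" "convex ?S3" "convex ?S4"
    by (intro convex_Times convex_singleton convex_real_interval)+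
  have sub: "?S1 \<subseteq> KK - UU" "?S2 \<subseteq> KK - UU" "?S3 \<subseteq> KK - UU" "?S4 \<subseteq> KK - UU"
    by (auto simp: KK_def UU_def)
  have ch: "\<forall>i<28. (rpt (bprev vs i) \<in> ?S1 \<and> rpt (vs ! i) \<in> ?S1) \<or> (rpt (bprev vs i) \<in> ?S2 \<and> rpt (vs ! i) \<in> ?S2)
     \<or> (rpt (bprev vs i) \<in> ?S3 \<and> rpt (vs ! i) \<in> ?S3) \<or> (rpt (bprev vs i) \<in> ?S4 \<and> rpt (vs ! i) \<in> ?S4)"
    unfolding all28 by (simp add: upt_rec bprev_vs vs_nth vf_def rpt_def)
  show ?thesis unfolding bcurve_def len_vs
  proof (rule UN_least)
    fix i assume "i \<in> {..<28::nat}"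
    then have "i < 28" by simp
    then have d: "(rpt (bprev vs i) \<in> ?S1 \<and> rpt (vs ! i) \<in> ?S1) \<or> (rpt (bprev vs i) \<in> ?S2 \<and> rpt (vs ! i) \<in> ?S2)
     \<or> (rpt (bprev vs i) \<in> ?S3 \<and> rpt (vs ! i) \<in> ?S3) \<or> (rpt (bprev vs i) \<in> ?S4 \<and> rpt (vs ! i) \<in> ?S4)"
      using ch by blast
    show "closed_segment (rpt (bprev vs i)) (rpt (vs ! i)) \<subseteq> KK - UU"
    proof (rule disjE[OF d])
      assume "rpt (bprev vs i) \<in> ?S1 \<and> rpt (vs ! i) \<in> ?S1"
      then show ?thesis using closed_segment_subset[OF _ _ cv(1)] sub(1) by (meson order_trans)
    next
      assume "(rpt (bprev vs i) \<in> ?S2 \<and> rpt (vs ! i) \<in> ?S2)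
     \<or> (rpt (bprev vs i) \<in> ?S3 \<and> rpt (vs ! i) \<in> ?S3) \<or> (rpt (bprev vs i) \<in> ?S4 \<and> rpt (vs ! i) \<in> ?S4)"
      then show ?thesis
      proof (elim disjE conjE)
        assume "rpt (bprev vs i) \<in> ?S2" "rpt (vs ! i) \<in> ?S2"
        then show ?thesis using closed_segment_subset[OF _ _ cv(2)] sub(2) by (meson order_trans)
      next
        assume "rpt (bprev vs i) \<in> ?S3" "rpt (vs ! i) \<in> ?S3"
        then show ?thesis using closed_segment_subset[OF _ _ cv(3)] sub(3) by (meson order_trans)
      next
        assume "rpt (bprev vs i) \<in> ?S4" "rpt (vs ! i) \<in> ?S4"
        then show ?thesis using closed_segment_subset[OF _ _ cv(4)] sub(4) by (meson order_trans)
      qed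
    qed
  qed
qed

lemma seg_h: "(a::real) \<le> x \<Longrightarrow> x \<le> a + 1 \<Longrightarrow> (x, y) \<in> closed_segment (a, y) (a + 1, y)"
  unfolding in_segment
  by (rule exI[of _ "x - a"]) (auto simp: algebra_simps)

lemma seg_v: "(a::real) \<le> y \<Longrightarrow> y \<le> a + 1 \<Longrightarrow> (x, y) \<in> closed_segment (x, a) (x, a + 1)"
  unfolding in_segment
  by (rule exI[of _ "y - a"]) (auto simp: algebra_simps)

lemma seg_in: "i < 28 \<Longrightarrow> z \<in> closed_segment (rpt (bprev vs i)) (rpt (vs ! i)) \<Longrightarrow> z \<in> bcurve vs"
  unfolding bcurve_def len_vs by blast

lemma kex: "0 \<le> (x::real) \<Longrightarrow> x \<le> 7 \<Longrightarrow> \<exists>k::nat. k < 7 \<and> real k \<le> x \<and> x \<le> real k + 1"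
proof (cases "x = 7")
  case True then show ?thesis by (intro exI[of _ 6]) auto
next
  case False
  assume h: "0 \<le> x" "x \<le> 7"
  define k where "k = nat \<lfloor>x\<rfloor>"
  have "real k = of_int \<lfloor>x\<rfloor>" using h by (simp add: k_def)
  moreover have "of_int \<lfloor>x\<rfloor> \<le> x" "x < of_int \<lfloor>x\<rfloor> + 1" by linarith+
  moreover have "x < 7" using h False by linarith
  ultimately have "real k \<le> x" "x \<le> real k + 1" "real k < 7" by linarith+
  then show ?thesis by (intro exI[of _ k]) auto
qed

lemma k7: "(k::nat) < 7 \<Longrightarrow> k = 0 \<or> k = 1 \<or> k = 2 \<or> k = 3 \<or> k = 4 \<or> k = 5 \<or> k = 6" by arith

lemma side_bot: "k < 7 \<Longrightarrow> real k \<le> x \<Longrightarrow> x \<le> real k + 1 \<Longrightarrow> (x, 0) \<in> bcurve vs"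
proof -
  assume k: "k < 7" and h: "real k \<le> x" "x \<le> real k + 1"
  have "rpt (bprev vs (Suc k)) = (real k, 0) \<and> rpt (vs ! Suc k) = (real k + 1, 0)"
    using k7[OF k] by (auto simp: bprev_vs vs_nth vf_def rpt_def)
  then show ?thesis using seg_in[of "Suc k"] seg_h[OF h, of "0::real"] k by simp
qed

lemma side_right: "k < 7 \<Longrightarrow> real k \<le> y \<Longrightarrow> y \<le> real k + 1 \<Longrightarrow> (7, y) \<in> bcurve vs"
proof -
  assume k: "k < 7" and h: "real k \<le> y" "y \<le> real k + 1"
  have "rpt (bprev vs (k+8)) = (7, real k) \<and> rpt (vs ! (k+8)) = (7, real k + 1)"
    using k7[OF k] by (auto simp: bprev_vs vs_nth vf_def rpt_def)
  then show ?thesis using seg_in[of "k+8"] seg_v[OF h, of "7::real"] k by simp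
qed

lemma side_top: "k < 7 \<Longrightarrow> real k \<le> x \<Longrightarrow> x \<le> real k + 1 \<Longrightarrow> (x, 7) \<in> bcurve vs"
proof -
  assume k: "k < 7" and h: "real k \<le> x" "x \<le> real k + 1"
  have "rpt (bprev vs (21 - k)) = (real k + 1, 7) \<and> rpt (vs ! (21 - k)) = (real k, 7)"
    using k7[OF k] by (auto simp: bprev_vs vs_nth vf_def rpt_def)
  then show ?thesis using seg_in[of "21 - k"] seg_h[OF h, of "7::real"] k by (simp add: closed_segment_commute)
qed

lemma side_left: "k < 7 \<Longrightarrow> real k \<le> y \<Longrightarrow> y \<le> real k + 1 \<Longrightarrow> (0, y) \<in> bcurve vs"
proof -
  assume k: "k < 7" and h: "real k \<le> y" "y \<le> real k + 1"
  have "rpt (bprev vs ((28 - k) mod 28)) = (0, real k + 1) \<and> rpt (vs ! ((28 - k) mod 28)) = (0, real k)"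
    using k7[OF k] by (auto simp: bprev_vs vs_nth vf_def rpt_def)
  then show ?thesis using seg_in[of "(28 - k) mod 28"] seg_v[OF h, of "0::real"] k by (simp add: closed_segment_commute)
qed

lemma frontier_sub: "KK - UU \<subseteq> bcurve vs"
proof
  fix z assume z: "z \<in> KK - UU"
  obtain x y where zz: "z = (x, y)" by (cases z)
  have r: "0 \<le> x" "x \<le> 7" "0 \<le> y" "y \<le> 7" and s: "x = 0 \<or> x = 7 \<or> y = 0 \<or> y = 7"
    using z zz unfolding KK_def UU_def by auto
  obtain kx where kx: "kx < 7" "real kx \<le> x" "x \<le> real kx + 1" using kex[OF r(1,2)] by blast
  obtain ky where ky: "ky < 7" "real ky \<le> y" "y \<le> real ky + 1" using kex[OF r(3,4)] by blast
  from s show "z \<in> bcurve vs"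
  proof (elim disjE)
    assume "x = 0" then show ?thesis using zz side_left[OF ky] by simp
  next
    assume "x = 7" then show ?thesis using zz side_right[OF ky] by simp
  next
    assume "y = 0" then show ?thesis using zz side_bot[OF kx] by simp
  next
    assume "y = 7" then show ?thesis using zz side_top[OF kx] by simp
  qed
qed

lemma inside_ok: "c \<in> LL \<Longrightarrow> open_square c \<subseteq> inside (bcurve vs)"
proof
  fix z assume c: "c \<in> LL" and z: "z \<in> open_square c"
  have "0 \<le> real_of_int (fst c)" "real_of_int (fst c) \<le> 6" "0 \<le> real_of_int (snd c)" "real_of_int (snd c) \<le> 6"
    using c by (auto simp: LL_def)
  then have zU: "z \<in> UU" using z by (cases z) (auto simp: open_square_def UU_def)
  have zn: "z \<notin> bcurve vs" using zU curve_sub by blast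
  let ?C = "connected_component_set (- bcurve vs) z"
  have "?C \<subseteq> UU"
  proof -
    have con: "connected ?C" by simp
    have o1: "open UU" unfolding UU_def by (intro open_Times open_greaterThanLessThan)
    have o2: "open (- KK)" unfolding KK_def by (intro open_Compl closed_Times closed_atLeastAtMost)
    have "?C \<subseteq> - bcurve vs" by (rule connected_component_subset)
    then have "?C \<subseteq> UU \<union> - KK" using frontier_sub by blast
    moreover have "UU \<inter> - KK \<inter> ?C = {}" by (auto simp: UU_def KK_def)
    ultimately have "UU \<inter> ?C = {} \<or> - KK \<inter> ?C = {}" using connectedD[OF con o1 o2] by blast
    moreover have "z \<in> ?C" using zn by (simp add: connected_component_refl_eq)
    ultimately show ?thesis using zU \<open>?C \<subseteq> UU \<union> - KK\<close> by blast
  qed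
  moreover have "bounded UU"
    by (rule bounded_subset[of "cbox (0,0) (7,7)"]) (auto simp: UU_def intro!: bounded_Times bounded_closed_interval)
  ultimately have "bounded ?C" by (rule bounded_subset[rotated])
  then show "z \<in> inside (bcurve vs)" using zn by (simp add: inside_def)
qed


definition RR :: "(cell \<times> cell) set" where
  "RR = {(u, v). u \<in> LL \<and> v \<in> LL \<and> (\<exists>n \<in> set N4. v = cadd u n)}"

lemma symRR: "sym RR"
  unfolding sym_def RR_def by (auto simp: N4_def cadd_def)

lemma row: "m \<le> 6 \<Longrightarrow> ((0,0),(int m,0)) \<in> RR\<^sup>*"
proof (induction m)
  case 0 then show ?case by simp
next
  case (Suc m)
  have "((int m, 0), (int (Suc m), 0)) \<in> RR" using Suc.prems
    by (auto simp: RR_def LL_def N4_def cadd_def intro!: bexI[of _ "(1,0)"])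
  then show ?case using Suc by (meson Suc_leD rtrancl.rtrancl_into_rtrancl)
qed

lemma col: "0 \<le> a \<Longrightarrow> a \<le> 6 \<Longrightarrow> m \<le> 6 \<Longrightarrow> ((a,0),(a,int m)) \<in> RR\<^sup>*"
proof (induction m)
  case 0 then show ?case by simp
next
  case (Suc m)
  have "((a, int m), (a, int (Suc m))) \<in> RR" using Suc.prems
    by (auto simp: RR_def LL_def N4_def cadd_def intro!: bexI[of _ "(0,1)"])
  then show ?case using Suc by (meson Suc_leD rtrancl.rtrancl_into_rtrancl)
qed

lemma from0: "c \<in> LL \<Longrightarrow> ((0,0), c) \<in> RR\<^sup>*"
proof -
  assume c: "c \<in> LL"
  obtain x y where cc: "c = (x,y)" by (cases c)
  have h: "0 \<le> x" "x \<le> 6" "0 \<le> y" "y \<le> 6" using c cc by (auto simp: LL_def)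
  have "((0,0),(int (nat x),0)) \<in> RR\<^sup>*" using h by (intro row) linarith
  moreover have "((x,0),(x,int (nat y))) \<in> RR\<^sup>*" using h by (intro col) linarith+
  ultimately show ?thesis using h cc by simp
qed

lemma conn: "cells_connected LL N4"
  unfolding cells_connected_def
proof (intro ballI)
  fix x y assume "x \<in> LL" "y \<in> LL"
  then have "((0,0), x) \<in> RR\<^sup>*" "((0,0), y) \<in> RR\<^sup>*" by (auto intro: from0)
  then have "(x, (0,0)) \<in> RR\<^sup>*" using sym_rtrancl[OF symRR] unfolding sym_def by blast
  then have "(x, y) \<in> RR\<^sup>*" using \<open>((0,0), y) \<in> RR\<^sup>*\<close> by simp
  then show "(x, y) \<in> {(u, v). u \<in> LL \<and> v \<in> LL \<and> (\<exists>n \<in> set N4. v = cadd u n)}\<^sup>*"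
    by (simp add: RR_def)
qed

lemma crosses_ok: "crosses LL N4 (0,2) (2,0) (6,3) (3,6)"
  unfolding crosses_def
proof (intro conjI exI)
  show "finite LL"
    by (rule finite_subset[of _ "{0..6} \<times> {0..6}"]) (auto simp: LL_def)
  show "cells_connected LL N4" by (rule conn)
  show "ext_boundary LL vs"
    unfolding ext_boundary_def using bnd_checks dist_vs inside_ok by (simp add: len_vs)
  have e: "ebar LL vs 3 = (2,0)" "ebar LL vs 11 = (6,3)" "ebar LL vs 18 = (3,6)" "ebar LL vs 26 = (0,2)"
    by (simp_all only: ebar_nth[of 3] ebar_nth[of 11] ebar_nth[of 18] ebar_nth[of 26] ebar_list, simp_all)
  show "let k = length vs; e = ebar LL vs in
         (\<forall>i j. i \<le> j \<and> j < k \<and> e i = e j \<and> e i \<in> {(0,2), (2,0), (6,3), (3,6)} \<longrightarrow>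
             card (e ` {i..j}) = 1 \<or> card (e ` ({0..i} \<union> {j..<k})) = 1) \<and>
         (\<exists>\<alpha> \<beta> \<gamma> \<delta>. \<alpha> < \<beta> \<and> \<beta> < \<gamma> \<and> \<gamma> < \<delta> \<and> \<delta> < k \<and>
             (\<exists>r < 4. [e \<alpha>, e \<beta>, e \<gamma>, e \<delta>] = rotate r [(0,2), (2,0), (6,3), (3,6)] \<or>
                      [e \<alpha>, e \<beta>, e \<gamma>, e \<delta>] = rotate r [(3,6), (6,3), (2,0), (0,2)]))"
    unfolding Let_def len_vs
  proof (intro conjI allI impI)
    fix i j assume h: "i \<le> j \<and> j < 28 \<and> ebar LL vs i = ebar LL vs j \<and> ebar LL vs i \<in> {(0,2), (2,0), (6,3), (3,6)}"
    have ij: "i < 28" "j < 28" using h by auto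
    have U: "\<And>m. m < 28 \<Longrightarrow> (ebar LL vs m = (0,2) \<longrightarrow> m = 26) \<and> (ebar LL vs m = (2,0) \<longrightarrow> m = 3)
   \<and> (ebar LL vs m = (6,3) \<longrightarrow> m = 11) \<and> (ebar LL vs m = (3,6) \<longrightarrow> m = 18)" using uniq by blast
    have "ebar LL vs i = (0,2) \<or> ebar LL vs i = (2,0) \<or> ebar LL vs i = (6,3) \<or> ebar LL vs i = (3,6)"
      using h by blast
    then have "i = j" using U[OF ij(1)] U[OF ij(2)] h by (elim disjE; metis)
    then show "card (ebar LL vs ` {i..j}) = 1 \<or> card (ebar LL vs ` ({0..i} \<union> {j..<28})) = 1" by simp
  next
    show "\<exists>\<alpha> \<beta> \<gamma> \<delta>. \<alpha> < \<beta> \<and> \<beta> < \<gamma> \<and> \<gamma> < \<delta> \<and> \<delta> < 28 \<and>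
             (\<exists>r < 4. [ebar LL vs \<alpha>, ebar LL vs \<beta>, ebar LL vs \<gamma>, ebar LL vs \<delta>] = rotate r [(0,2), (2,0), (6,3), (3,6)] \<or>
                      [ebar LL vs \<alpha>, ebar LL vs \<beta>, ebar LL vs \<gamma>, ebar LL vs \<delta>] = rotate r [(3,6), (6,3), (2,0), (0,2)])"
      by (rule exI[of _ 3], rule exI[of _ 11], rule exI[of _ 18], rule exI[of _ 26])
         (simp add: e, rule exI[of _ 1], simp)
  qed
qed

theorem theorem1:
  fixes S :: "'s set" and bl :: 's
  assumes "finite S" and "bl \<in> S"
  shows "\<exists>(L :: cell set) (A :: cell set) (f :: cell \<Rightarrow> 's list \<Rightarrow> nat \<Rightarrow> 's)
            a1 a2 b1 b2 (\<delta>1 :: int) (\<delta>2 :: int).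
           is_CAS S bl L A N4 f \<and>
           a1 \<in> A \<and> a2 \<in> A \<and> b1 \<in> L \<and> b2 \<in> L \<and> distinct [a1, a2, b1, b2] \<and>
           is_channel S bl L A N4 f a1 b1 \<delta>1 \<and>
           is_channel S bl L A N4 f a2 b2 \<delta>2 \<and>
           crosses L N4 a1 a2 b1 b2"
proof -
  have c1: "is_channel S bl LL AA N4 (ff bl) (0,2) (6,3) 9"
    by (rule chan) (auto simp: act_def tbl_def invt_def AA_def)
  have c2: "is_channel S bl LL AA N4 (ff bl) (2,0) (3,6) 9"
    by (rule chan) (auto simp: act_def tbl_def invt_def AA_def)
  show ?thesis
    apply (rule exI[of _ LL], rule exI[of _ AA], rule exI[of _ "ff bl"])
    apply (rule exI[of _ "(0,2)"], rule exI[of _ "(2,0)"], rule exI[of _ "(6,3)"], rule exI[of _ "(3,6)"])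
    apply (rule exI[of _ 9], rule exI[of _ 9])
    apply (intro conjI)
    using cas[OF assms] c1 c2 crosses_ok by (simp_all add: AA_def LL_def)
qed

end
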